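(* Let $n\ge 3$ be an integer and let $\overline D_n:=\langle a,b\mid aba=bab,\ ab^2a=b^{n-2}\rangle$. Then in $\overline D_n$ the identity $$a^n=(b^{n-4}a^{-1})^n$$ holds. *)

theory Defs
  imports "HOL-Algebra.Group"
begin

end

theory Submission
  imports Defs
begin

lemma (in group) inv_cancel_left':
  "x \<in> carrier G \<Longrightarrow> y \<in> carrier G \<Longrightarrow> inv x \<otimes> (x \<otimes> y) = y"
  by (simp add: m_assoc[symmetric])

lemma (in group) conj_pow:
  assumes "c \<in> carrier G" "x \<in> carrier G"
  shows "(c \<otimes> x \<otimes> inv c) [^] (k::nat) = c \<otimes> x [^] k \<otimes> inv c"
proof (induction k)
  case 0 then show ?case using assms by (simp add: r_inv)
next
  case (Suc k)
  have "(c \<otimes> x \<otimes> inv c) [^] Suc k = (c \<otimes> x [^] k \<otimes> inv c) \<otimes> (c \<otimes> x \<otimes> inv c)"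
    using Suc by (simp add: nat_pow_Suc)
  also have "\<dots> = c \<otimes> (x [^] k \<otimes> (inv c \<otimes> c) \<otimes> x) \<otimes> inv c"
    using assms by (simp add: m_assoc) (simp add: m_assoc[symmetric])
  also have "\<dots> = c \<otimes> x [^] Suc k \<otimes> inv c"
    using assms by (simp add: l_inv nat_pow_Suc)
  finally show ?case .
qed

lemma (in group) shift_pow:
  assumes "a \<in> carrier G" "b \<in> carrier G" "D \<in> carrier G" "D \<otimes> b = a \<otimes> D"
  shows "a [^] (k::nat) \<otimes> D = D \<otimes> b [^] k"
proof (induction k)
  case 0 then show ?case using assms by simp
next
  case (Suc k)
  have "a [^] Suc k \<otimes> D = a [^] k \<otimes> (a \<otimes> D)"
    using assms by (simp add: nat_pow_Suc m_assoc)
  also have "\<dots> = (a [^] k \<otimes> D) \<otimes> b" using assms by (simp add: m_assoc)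
  also have "\<dots> = D \<otimes> b [^] Suc k" using Suc assms by (simp add: nat_pow_Suc m_assoc)
  finally show ?case .
qed

theorem mainTheorem5:
  fixes G (structure) and n :: nat and a b
  assumes "group G" and "n \<ge> 3"
    and "a \<in> carrier G" and "b \<in> carrier G"
    and "a \<otimes> b \<otimes> a = b \<otimes> a \<otimes> b"
    and "a \<otimes> (b [^] (2::nat)) \<otimes> a = b [^] (n - 2)"
  shows "a [^] n = (b [^] (int n - 4) \<otimes> inv a) [^] n"
proof -
  interpret group G by fact
  note ab = assms(3,4)
  define D where "D = a \<otimes> b \<otimes> a"
  have Dc: "D \<in> carrier G" using ab by (simp add: D_def)
  have h1: "D \<otimes> b = a \<otimes> D" unfolding D_def
    using ab by (simp add: m_assoc assms(5)[symmetric, simplified m_assoc])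
  have h2: "D \<otimes> a = b \<otimes> D"
  proof -
    have "b \<otimes> D = (b \<otimes> a \<otimes> b) \<otimes> a" using ab by (simp add: D_def m_assoc)
    also have "\<dots> = D \<otimes> a" using assms(5) by (simp add: D_def)
    finally show ?thesis by simp
  qed
  have b2: "b [^] (2::nat) = b \<otimes> b" using ab by (simp add: numeral_2_eq_2)
  have nn: "n = Suc (Suc (n - 2))" using assms(2) by arith
  have "b [^] n = b \<otimes> b [^] (n - 2) \<otimes> b"
    proof -
    have "b [^] n = b [^] Suc (Suc (n - 2))" using nn by simp
    also have "\<dots> = b \<otimes> b [^] Suc (n - 2)" using ab by (simp only: nat_pow_Suc2)
    also have "\<dots> = b \<otimes> (b [^] (n - 2) \<otimes> b)" using ab by (simp only: nat_pow_Suc)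
    finally show ?thesis using ab by (simp add: m_assoc)
  qed
  also have "\<dots> = (b \<otimes> a \<otimes> b) \<otimes> (b \<otimes> a \<otimes> b)"
    using ab by (simp add: assms(6)[symmetric] b2 m_assoc)
  also have "\<dots> = D \<otimes> D" using assms(5) by (simp add: D_def)
  finally have bn: "b [^] n = D \<otimes> D" .
  have "a [^] n \<otimes> D = (D \<otimes> D) \<otimes> D"
    using shift_pow[OF ab Dc h1, of n] bn Dc by (simp add: m_assoc)
  hence an: "a [^] n = D \<otimes> D" using Dc ab by (metis m_closed nat_pow_closed right_cancel)
  have cent: "(D \<otimes> D) \<otimes> b = b \<otimes> (D \<otimes> D)"
    proof -
    have "(D \<otimes> D) \<otimes> b = D \<otimes> (a \<otimes> D)" using Dc ab h1 by (simp add: m_assoc)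
    also have "\<dots> = (D \<otimes> a) \<otimes> D" using Dc ab by (simp add: m_assoc)
    also have "\<dots> = b \<otimes> (D \<otimes> D)" using Dc ab h2 by (simp add: m_assoc)
    finally show ?thesis .
  qed
  define c where "c = inv b \<otimes> inv b"
  have cc: "c \<in> carrier G" using ab by (simp add: c_def)
  have ic: "inv c = b \<otimes> b" using ab by (simp add: c_def inv_mult_group)
  have "b [^] (int n - 4) = b [^] (-2::int) \<otimes> b [^] (int (n - 2))"
    using ab assms(2) by (simp add: int_pow_mult[symmetric] of_nat_diff)
  also have "b [^] (-2::int) = c" 
  proof -
    have "b [^] (-2::int) = inv (b [^] (2::int))" using ab by (simp add: int_pow_neg)
    also have "b [^] (2::int) = b [^] (2::nat)" using int_pow_int[of G b 2] by simp
    finally show ?thesis using ab by (simp add: c_def b2 inv_mult_group)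
  qed
  also have "b [^] (int (n - 2)) = a \<otimes> (b \<otimes> b) \<otimes> a"
    using ab by (simp add: int_pow_int assms(6)[symmetric] b2)
  finally have "b [^] (int n - 4) \<otimes> inv a = c \<otimes> a \<otimes> inv c"
    using ab cc by (simp add: ic m_assoc)
  hence "(b [^] (int n - 4) \<otimes> inv a) [^] n = c \<otimes> (D \<otimes> D) \<otimes> inv c"
    using conj_pow[OF cc ab(1)] an by simp
  also have "\<dots> = D \<otimes> D"
    using cc Dc ab cent by (simp add: ic m_assoc[symmetric]) (simp add: m_assoc c_def inv_cancel_left')
  finally show ?thesis using an by simp
qed

end
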